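(* Let $\beta,\psi_0$ be real constants, $\kappa>0$, $K\neq0$, and $I=\{r>0:1-Kr^2>0\}$. Set $\tilde{\mathcal{C}}\equiv0$, $\mathcal{A}(\psi)=\frac{5\beta}{8}\psi^2$, $\mathcal{V}(\psi)=-\frac{15K\beta}{4\kappa^2}\psi^2$, and $$A(r)=1-Kr^2,\qquad C(r)=1,\qquad \psi(r)=\frac{2\psi_0}{5K(1-Kr^2)^{5/4}} .$$ Then $E^{(1)}_{tt}=E^{(1)}_{rr}=E^{(1)}_{\vartheta\vartheta}=E^{(1)}_{\psi}=0$ hold on $I$.
   Context: Metric ansatz ${\rm d}s^2=A(r)^2{\rm d}t^2-\frac{C(r)^2}{A(r)^2}{\rm d}r^2-r^2{\rm d}\Omega^2$, $\psi=\psi(r)$. Primes on $A,C,\psi$ are $r$-derivatives; $\mathcal{A}',\tilde{\mathcal{C}}',\tilde{\mathcal{C}}'',\mathcal{V}'$ are $\psi$-derivatives evaluated at $\psi(r)$. The real-tetrad reduced vacuum field equations of the scalar-torsion theory are: $E^{(1)}_{tt}:\ 0=\mathcal{A}\frac{A^2(-2rACA'-A^2(C-2rC')+C^3)}{r^2C^3}+\tilde{\mathcal{C}}'\Big(\frac{A^4\psi''}{C^2}-\frac{A^3\psi'(-rCA'+rAC'-2C^2)}{rC^3}\Big)-\frac{2A^3(A-C)\psi'\mathcal{A}'}{rC^2}+\frac{A^4\psi'^2\tilde{\mathcal{C}}''}{C^2}-\frac{\beta A^4\psi'^2}{2C^2}+\kappa^2A^2\mathcal{V}$; $E^{(1)}_{rr}:\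 0=-\frac{(2rAA'+A^2-C^2)\mathcal{A}}{r^2A^2}+\big(\frac{A'}{A}+\frac2r\big)\psi'\tilde{\mathcal{C}}'+\frac{\kappa^2C^2\mathcal{V}}{A^2}+\frac12\beta\psi'^2$; $E^{(1)}_{\vartheta\vartheta}:\ 0=-\frac{A\psi'(rA'+A-C)\mathcal{A}'}{rC^2}+\tilde{\mathcal{C}}'\Big(\frac{A\psi'(rCA'-rAC'+C^2)}{rC^3}+\frac{A^2\psi''}{C^2}\Big)+\frac{\mathcal{A}(-rCA'^2+A(rA'C'-C(rA''+2A'))+A^2C')}{rC^3}+\frac{A^2\psi'^2\tilde{\mathcal{C}}''}{C^2}-\frac{\beta A^2\psi'^2}{2C^2}+\kappa^2\mathcal{V}$; $E^{(1)}_{\psi}:\ 0=\frac{(A-C)(2rA'+A-C)\mathcal{A}'}{r^2C^2}+\frac{\beta A\psi'(2rCA'+A(2C-rC'))}{rC^3}+\frac{\beta A^2\psi''}{C^2}+\kappa^2\mathcal{V}'+\frac{\tilde{\mathcal{C}}'(rCA'(rA'-2C)+A(-r^2A'C'+rC(rA''+6A')-2C^2)+2A^2(C-rC'))}{r^2C^3}$. *)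

theory Defs
  imports "HOL-Analysis.Analysis"
begin

text \<open>Reduced vacuum field equations (real tetrad) of the scalar-torsion theory for
  the metric ansatz ds^2 = A^2 dt^2 - C^2/A^2 dr^2 - r^2 dOmega^2, psi = psi(r).
  Arguments: metric functions A C, scalar field psi (functions of r), coupling
  functions cA (calligraphic A), cC (tilde C), cV (calligraphic V) of psi,
  constants beta, kappa, and radius r. Each definition is the right-hand side of
  the corresponding equation 0 = ... ; derivatives are genuine derivatives.\<close>

definition E_tt :: "(real\<Rightarrow>real) \<Rightarrow> (real\<Rightarrow>real) \<Rightarrow> (real\<Rightarrow>real) \<Rightarrow> (real\<Rightarrow>real) \<Rightarrow> (real\<Rightarrow>real) \<Rightarrow> (real\<Rightarrow>real) \<Rightarrow> real \<Rightarrow> real \<Rightarrow> real \<Rightarrow> real" where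
  "E_tt A C psi cA cC cV beta kappa r =
    (let a = A r; a1 = deriv A r; c = C r; c1 = deriv C r;
         p = psi r; p1 = deriv psi r; p2 = deriv (deriv psi) r;
         fA = cA p; fA1 = deriv cA p; fC1 = deriv cC p; fC2 = deriv (deriv cC) p; fV = cV p
     in fA * (a^2 * (-2*r*a*c*a1 - a^2*(c - 2*r*c1) + c^3)) / (r^2 * c^3)
        + fC1 * (a^4 * p2 / c^2 - a^3 * p1 * (-r*c*a1 + r*a*c1 - 2*c^2) / (r * c^3))
        - 2 * a^3 * (a - c) * p1 * fA1 / (r * c^2)
        + a^4 * p1^2 * fC2 / c^2
        - beta * a^4 * p1^2 / (2 * c^2)
        + kappa^2 * a^2 * fV)"

definition E_rr :: "(real\<Rightarrow>real) \<Rightarrow> (real\<Rightarrow>real) \<Rightarrow> (real\<Rightarrow>real) \<Rightarrow> (real\<Rightarrow>real) \<Rightarrow> (real\<Rightarrow>real) \<Rightarrow> (real\<Rightarrow>real) \<Rightarrow> real \<Rightarrow> real \<Rightarrow> real \<Rightarrow> real" where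
  "E_rr A C psi cA cC cV beta kappa r =
    (let a = A r; a1 = deriv A r; c = C r;
         p = psi r; p1 = deriv psi r;
         fA = cA p; fC1 = deriv cC p; fV = cV p
     in - ((2*r*a*a1 + a^2 - c^2) * fA) / (r^2 * a^2)
        + (a1 / a + 2 / r) * p1 * fC1
        + kappa^2 * c^2 * fV / a^2
        + 1/2 * beta * p1^2)"

definition E_thth :: "(real\<Rightarrow>real) \<Rightarrow> (real\<Rightarrow>real) \<Rightarrow> (real\<Rightarrow>real) \<Rightarrow> (real\<Rightarrow>real) \<Rightarrow> (real\<Rightarrow>real) \<Rightarrow> (real\<Rightarrow>real) \<Rightarrow> real \<Rightarrow> real \<Rightarrow> real \<Rightarrow> real" where
  "E_thth A C psi cA cC cV beta kappa r =
    (let a = A r; a1 = deriv A r; a2 = deriv (deriv A) r; c = C r; c1 = deriv C r;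
         p = psi r; p1 = deriv psi r; p2 = deriv (deriv psi) r;
         fA = cA p; fA1 = deriv cA p; fC1 = deriv cC p; fC2 = deriv (deriv cC) p; fV = cV p
     in - a * p1 * (r*a1 + a - c) * fA1 / (r * c^2)
        + fC1 * (a * p1 * (r*c*a1 - r*a*c1 + c^2) / (r * c^3) + a^2 * p2 / c^2)
        + fA * (-r*c*a1^2 + a*(r*a1*c1 - c*(r*a2 + 2*a1)) + a^2*c1) / (r * c^3)
        + a^2 * p1^2 * fC2 / c^2
        - beta * a^2 * p1^2 / (2 * c^2)
        + kappa^2 * fV)"

definition E_psi :: "(real\<Rightarrow>real) \<Rightarrow> (real\<Rightarrow>real) \<Rightarrow> (real\<Rightarrow>real) \<Rightarrow> (real\<Rightarrow>real) \<Rightarrow> (real\<Rightarrow>real) \<Rightarrow> (real\<Rightarrow>real) \<Rightarrow> real \<Rightarrow> real \<Rightarrow> real \<Rightarrow> real" where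
  "E_psi A C psi cA cC cV beta kappa r =
    (let a = A r; a1 = deriv A r; a2 = deriv (deriv A) r; c = C r; c1 = deriv C r;
         p = psi r; p1 = deriv psi r; p2 = deriv (deriv psi) r;
         fA1 = deriv cA p; fC1 = deriv cC p; fV1 = deriv cV p
     in (a - c) * (2*r*a1 + a - c) * fA1 / (r^2 * c^2)
        + beta * a * p1 * (2*r*c*a1 + a*(2*c - r*c1)) / (r * c^3)
        + beta * a^2 * p2 / c^2
        + kappa^2 * fV1
        + fC1 * (r*c*a1*(r*a1 - 2*c) + a*(- (r^2*a1*c1) + r*c*(r*a2 + 6*a1) - 2*c^2)
                 + 2*a^2*(c - r*c1)) / (r^2 * c^3))"

end

theory Submission
  imports Defs
begin

lemma dpsi:
  assumes K: "K \<noteq> 0" and u: "0 < 1 - K*x^2"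
  shows "((\<lambda>r::real. 2 * psi0 / (5 * K * (1 - K * r^2) powr (5/4))) has_real_derivative psi0*x*(1-K*x^2) powr(-9/4)) (at x)"
proof -
  have g: "((\<lambda>r::real. 1 - K*r^2) has_real_derivative -(2*K*x)) (at x)"
    by (auto intro!: derivative_eq_intros)
  have "((\<lambda>r. (2*psi0/(5*K)) * (1 - K*r^2) powr (-5/4)) has_real_derivative
        (2*psi0/(5*K)) * ((-5/4) * (1-K*x^2) powr (-5/4 - of_nat 1) * -(2*K*x))) (at x)"
    by (intro DERIV_cmult DERIV_fun_powr[OF g u])
  hence "((\<lambda>r. (2*psi0/(5*K)) * (1 - K*r^2) powr (-5/4)) has_real_derivative
        psi0*x*(1-K*x^2) powr(-9/4)) (at x)"
    using K by (simp add: field_simps)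
  then show ?thesis
    apply (rule has_field_derivative_transform_within_open[where S="{r. 0 < 1 - K*r^2}"])
    using u by (auto intro!: open_Collect_less continuous_intros simp: powr_minus field_simps)
qed

lemma dpsi1:
  assumes K: "K \<noteq> 0" and u: "0 < 1 - K*x^2"
  shows "((\<lambda>r::real. psi0*r*(1-K*r^2) powr(-9/4)) has_real_derivative
     psi0*(1-K*x^2) powr(-9/4) + 9/2*psi0*K*x^2*(1-K*x^2) powr (-13/4)) (at x)"
proof -
  have g: "((\<lambda>r::real. 1 - K*r^2) has_real_derivative -(2*K*x)) (at x)"
    by (auto intro!: derivative_eq_intros)
  show ?thesis
    apply (rule DERIV_cong[OF DERIV_mult[OF DERIV_cmult[OF DERIV_ident, of psi0] DERIV_fun_powr[OF g u, of "-9/4"]]])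
    by (simp add: algebra_simps power2_eq_square)
qed

theorem mainTheorem5:
  fixes beta psi0 kappa K :: real
  assumes "kappa > 0" and "K \<noteq> 0"
  defines "A \<equiv> (\<lambda>r::real. 1 - K * r^2)"
      and "C \<equiv> (\<lambda>r::real. 1::real)"
      and "psi \<equiv> (\<lambda>r::real. 2 * psi0 / (5 * K * (1 - K * r^2) powr (5/4)))"
      and "cA \<equiv> (\<lambda>p::real. 5 * beta / 8 * p^2)"
      and "cC \<equiv> (\<lambda>p::real. 0::real)"
      and "cV \<equiv> (\<lambda>p::real. - (15 * K * beta / (4 * kappa^2)) * p^2)"
  shows "\<forall>r \<in> {r::real. r > 0 \<and> 1 - K * r^2 > 0}.
           E_tt A C psi cA cC cV beta kappa r = 0 \<and>
           E_rr A C psi cA cC cV beta kappa r = 0 \<and>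
           E_thth A C psi cA cC cV beta kappa r = 0 \<and>
           E_psi A C psi cA cC cV beta kappa r = 0"
proof
  fix r assume "r \<in> {r::real. r > 0 \<and> 1 - K * r^2 > 0}"
  hence r: "r > 0" and u: "0 < 1 - K*r^2" by auto
  define S where "S = {r::real. 0 < 1 - K*r^2}"
  have So: "open S" unfolding S_def by (auto intro!: open_Collect_less continuous_intros)
  have dA: "deriv A = (\<lambda>r. -(2*K*r))"
    by (rule ext, rule DERIV_imp_deriv) (auto simp: A_def intro!: derivative_eq_intros)
  have ddA: "deriv (\<lambda>r. -(2*K*r)) r = -(2*K)"
    by (rule DERIV_imp_deriv) (auto intro!: derivative_eq_intros)
  have dC: "deriv C = (\<lambda>r. 0)" unfolding C_def by (rule ext) simp
  have dcC: "deriv cC = (\<lambda>r. 0)" unfolding cC_def by (rule ext) simp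
  have dcA: "deriv cA p = 5*beta/4*p" for p
    by (rule DERIV_imp_deriv) (auto simp: cA_def intro!: derivative_eq_intros)
  have dcV: "deriv cV p = - (15 * K * beta / (2 * kappa^2)) * p" for p
    using assms(1) by (intro DERIV_imp_deriv) (auto simp: cV_def power2_eq_square intro!: derivative_eq_intros)
  have dpsiS: "deriv psi x = psi0*x*(1-K*x^2) powr(-9/4)" if "x \<in> S" for x
    unfolding psi_def using that assms(2) by (intro DERIV_imp_deriv dpsi) (auto simp: S_def)
  have dpsi_r: "deriv psi r = psi0*r*(1-K*r^2) powr(-9/4)" using dpsiS u S_def by auto
  have ddpsi: "deriv (deriv psi) r = psi0*(1-K*r^2) powr(-9/4) + 9/2*psi0*K*r^2*(1-K*r^2) powr (-13/4)"
  proof -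
    have "eventually (\<lambda>x. x \<in> S) (nhds r)" using So u S_def by (intro eventually_nhds_in_open) auto
    hence "eventually (\<lambda>x. deriv psi x = psi0*x*(1-K*x^2) powr(-9/4)) (nhds r)"
      by (rule eventually_mono) (rule dpsiS)
    hence "deriv (deriv psi) r = deriv (\<lambda>x. psi0*x*(1-K*x^2) powr(-9/4)) r"
      by (intro deriv_cong_ev) auto
    also have "\<dots> = psi0*(1-K*r^2) powr(-9/4) + 9/2*psi0*K*r^2*(1-K*r^2) powr (-13/4)"
      by (intro DERIV_imp_deriv dpsi1 assms(2) u)
    finally show ?thesis .
  qed
  define U where "U = 1 - K*r^2"
  define q where "q = U powr (-5/4)"
  have U0: "U > 0" using u U_def by simp
  have q0: "q > 0" using U0 q_def by simp
  have Um: "U powr (-1) = 1/U" using U0 by (simp add: powr_minus divide_inverse)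
  have q9: "U powr (-9/4) = q / U"
  proof -
    have "U powr (-9/4) = U powr (-5/4 + -1)" by simp
    also have "\<dots> = q / U" unfolding powr_add q_def Um by simp
    finally show ?thesis .
  qed
  have q13: "U powr (-13/4) = q / U^2"
  proof -
    have "U powr (-13/4) = U powr (-9/4 + -1)" by simp
    also have "\<dots> = q / U^2" unfolding powr_add q9 Um by (simp add: power2_eq_square)
    finally show ?thesis .
  qed
  have ps: "psi r = 2*psi0/(5*K) * q"
  proof -
    have e: "q = inverse (U powr (5/4))" unfolding q_def using powr_minus[of U "5/4"] by simp
    have "psi r = 2*psi0/(5*K*U powr(5/4))" by (simp only: psi_def U_def)
    also have "\<dots> = 2*psi0/(5*K) * inverse (U powr (5/4))" by (rule trans[OF divide_divide_eq_left[symmetric] divide_inverse])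
    finally show ?thesis using e by simp
  qed
  have Ke: "K * r^2 = 1 - U" using U_def by simp
  have Ar: "A r = U" unfolding A_def U_def ..
  have Cr: "C r = 1" unfolding C_def ..
  have ddcC: "deriv (deriv cC) p = 0" for p unfolding dcC by simp
  have cAp: "cA p = 5 * beta / 8 * p^2" for p unfolding cA_def ..
  have cVp: "cV p = - (15 * K * beta / (4 * kappa^2)) * p^2" for p unfolding cV_def ..
  have Kd: "K = (1-U)/r^2" using r U_def by (simp add: field_simps)
  have U1: "1 - U \<noteq> 0" using assms(2) Kd by auto
  have k0: "kappa \<noteq> 0" using assms(1) by simp
  have Uu: "1 - K*r^2 = U" unfolding U_def ..
  note vals = Uu Ar Cr dA ddA dC dcC ddcC dcA dcV dpsi_r ddpsi cAp cVp q9 q13 ps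
  have "E_tt A C psi cA cC cV beta kappa r = 0"
    unfolding E_tt_def Let_def vals
    unfolding Kd using r U0 U1 k0 by (simp add: field_simps) algebra
  have "E_rr A C psi cA cC cV beta kappa r = 0"
    unfolding E_rr_def Let_def vals
    unfolding Kd using r U0 U1 k0 by (simp add: field_simps) algebra
  have "E_thth A C psi cA cC cV beta kappa r = 0"
    unfolding E_thth_def Let_def vals
    unfolding Kd using r U0 U1 k0 by (simp add: field_simps) algebra
  have "E_psi A C psi cA cC cV beta kappa r = 0"
    unfolding E_psi_def Let_def vals
    unfolding Kd using r U0 U1 k0 by (simp add: field_simps) algebra
  show "E_tt A C psi cA cC cV beta kappa r = 0 \<and>
           E_rr A C psi cA cC cV beta kappa r = 0 \<and>
           E_thth A C psi cA cC cV beta kappa r = 0 \<and>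
           E_psi A C psi cA cC cV beta kappa r = 0"
    using \<open>E_tt A C psi cA cC cV beta kappa r = 0\<close> \<open>E_rr A C psi cA cC cV beta kappa r = 0\<close>
      \<open>E_thth A C psi cA cC cV beta kappa r = 0\<close> \<open>E_psi A C psi cA cC cV beta kappa r = 0\<close> by blast
qed

end
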